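(* Let $\lambda$ be a nonzero real number and let $r\ge 1$ be an integer. Then, as formal power series in $t$, $$-\frac{\log_{\lambda}(1-t)}{(1-t)^{r}}=\sum_{n=1}^{\infty}H_{n,\lambda}^{(r)}t^{n},$$ and $H_{0,\lambda}^{(r)}=0$.
   Context: For real $x$ and integer $k\ge0$: $(x)_{0,\lambda}=1$, $(x)_{k,\lambda}=x(x-\lambda)(x-2\lambda)\cdots(x-(k-1)\lambda)$ for $k\ge1$ (so $(1)_{k,1/\lambda}$ denotes this product with step $1/\lambda$). The degenerate logarithm is the formal power series $\log_{\lambda}(1+t)=\sum_{k=1}^{\infty}\lambda^{k-1}(1)_{k,1/\lambda}\frac{t^{k}}{k!}$ (equivalently $\log_\lambda(1+t)=((1+t)^\lambda-1)/\lambda$); it is the compositional inverse of the degenerate exponential $e_\lambda(t)=\sum_{k\ge0}(1)_{k,\lambda}t^k/k!=(1+\lambda t)^{1/\lambda}$. The degenerate harmonic numbers are $H_{0,\lambda}=0$ and $H_{n,\lambda}=\sum_{k=1}^{n}\frac{1}{\lambda}\binom{\lambda}{k}(-1)^{k-1}$ for $n\ge1$. The degenerate hyperharmonic numbers are defined by $H_{n,\lambda}^{(1)}=H_{n,\lambda}$ and $H_{n,\lambda}^{(r)}=\sum_{k=1}^{n}H_{k,\lambda}^{(r-1)}$ for $r\ge2$ (so $H^{(r)}_{0,\lambda}$ is an empty sum for $r\ge 2$). *)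

theory Defs
  imports Complex_Main "HOL-Computational_Algebra.Formal_Power_Series"
begin

definition deg_fall :: "real \<Rightarrow> nat \<Rightarrow> real \<Rightarrow> real" where
  "deg_fall x k l = (\<Prod>i<k. x - real i * l)"

text \<open>Degenerate logarithm log_l(1+t) as a formal power series.\<close>
definition dlog :: "real \<Rightarrow> real fps" where
  "dlog l = Abs_fps (\<lambda>k. if k = 0 then 0
                          else l ^ (k - 1) * deg_fall 1 k (1 / l) / fact k)"

definition dharm :: "nat \<Rightarrow> real \<Rightarrow> real" where
  "dharm n l = (\<Sum>k=1..n. (1 / l) * (l gchoose k) * (-1) ^ (k - 1))"

text \<open>Degenerate hyperharmonic numbers H^{(r)}_{n,l}, r >= 1 (r = 0 is a dummy case).\<close>
fun dhyper :: "nat \<Rightarrow> nat \<Rightarrow> real \<Rightarrow> real" where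
  "dhyper 0 n l = dharm n l"
| "dhyper (Suc 0) n l = dharm n l"
| "dhyper (Suc (Suc r)) n l = (\<Sum>k=1..n. dhyper (Suc r) k l)"

end

theory Submission
  imports Defs
begin

lemma coef_eq:
  fixes l :: real assumes "l \<noteq> 0" "k \<ge> 1"
  shows "l ^ (k - 1) * deg_fall 1 k (1 / l) / fact k = (1 / l) * (l gchoose k)"
proof -
  have "l ^ k * deg_fall 1 k (1 / l) = (\<Prod>i<k. l) * (\<Prod>i<k. 1 - real i * (1 / l))"
    by (simp add: deg_fall_def)
  also have "\<dots> = (\<Prod>i<k. l * (1 - real i * (1 / l)))"
    by (rule prod.distrib[symmetric])
  also have "\<dots> = (\<Prod>i<k. l - real i)"
    using assms by (intro prod.cong) (auto simp: right_diff_distrib)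
  finally have h: "l ^ k * deg_fall 1 k (1 / l) = (\<Prod>i<k. l - real i)" .
  have "l ^ k = l * l ^ (k - 1)" using assms(2)
    by (cases k) auto
  with h have "l * (l ^ (k - 1) * deg_fall 1 k (1 / l)) = (\<Prod>i<k. l - real i)"
    by (simp only: mult.assoc)
  then have "l ^ (k - 1) * deg_fall 1 k (1 / l) = (1 / l) * (\<Prod>i<k. l - real i)"
    using assms(1) by (metis nonzero_mult_div_cancel_left divide_inverse mult.commute mult_1)
  moreover have "(\<Prod>i<k. l - real i) = (\<Prod>i=0..<k. l - of_nat i)"
    by (simp add: atLeast0LessThan)
  ultimately show ?thesis by (simp add: gbinomial_prod_rev)
qed

lemma partial_sums:
  fixes f :: "real fps"
  shows "f * Abs_fps (\<lambda>n. 1) = Abs_fps (\<lambda>n. \<Sum>k=0..n. fps_nth f k)"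
  by (simp add: fps_eq_iff fps_mult_nth)

lemma dhyper0: "dhyper r 0 l = 0"
proof (cases r)
  case (Suc s) then show ?thesis by (cases s) (auto simp: dharm_def)
qed (simp add: dharm_def)

lemma main:
  fixes l :: real assumes "l \<noteq> 0" "r \<ge> 1"
  shows "- fps_compose (dlog l) (- fps_X) * Abs_fps (\<lambda>n. 1) ^ r
           = Abs_fps (\<lambda>n. dhyper r n l)"
  using assms(2)
proof (induction r rule: dec_induct)
  case base
  have A: "- fps_compose (dlog l) (- fps_X) = Abs_fps (\<lambda>k. if k = 0 then 0 else (1 / l) * (l gchoose k) * (-1) ^ (k - 1))"
  proof (rule fps_ext)
    fix k show "fps_nth (- fps_compose (dlog l) (- fps_X)) k = fps_nth (Abs_fps (\<lambda>k. if k = 0 then 0 else (1 / l) * (l gchoose k) * (-1) ^ (k - 1))) k"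
    proof (cases "k = 0")
      case False
      then have "(-1::real) ^ k = - ((-1) ^ (k - 1))"
        by (metis Suc_diff_1 bot_nat_0.not_eq_extremum mult_minus1 power_Suc)
      with False show ?thesis using coef_eq[OF assms(1), of k]
        by (simp add: fps_compose_uminus' dlog_def)
    qed (simp add: fps_compose_uminus' dlog_def)
  qed
  show ?case unfolding A power_one_right partial_sums
    by (simp add: dharm_def sum.atLeast_Suc_atMost fps_eq_iff if_distrib cong: if_cong)
next
  case (step r)
  obtain s where s: "r = Suc s" using step(1) by (cases r) auto
  have "- fps_compose (dlog l) (- fps_X) * Abs_fps (\<lambda>n. 1) ^ Suc r
     = (- fps_compose (dlog l) (- fps_X) * Abs_fps (\<lambda>n. 1) ^ r) * Abs_fps (\<lambda>n. 1)"
    by (simp only: power_Suc2 mult.assoc)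
  also have "\<dots> = Abs_fps (\<lambda>n. dhyper (Suc r) n l)"
    unfolding step(3) partial_sums using s
    by (simp add: fps_eq_iff sum.atLeast_Suc_atMost dhyper0)
  finally show ?case .
qed

lemma inv1: "inverse (1 - fps_X :: real fps) = Abs_fps (\<lambda>n. 1)"
proof -
  have "inverse (1 - fps_X :: real fps) = inverse (inverse (Abs_fps (\<lambda>n. 1)))"
    by (simp only: fps_inverse_gp')
  also have "\<dots> = Abs_fps (\<lambda>n. 1)" by (rule fps_inverse_idempotent) simp
  finally show ?thesis .
qed

theorem theorem1:
  fixes l :: real and r :: nat
  assumes "l \<noteq> 0" and "r \<ge> 1"
  shows "- fps_compose (dlog l) (- fps_X) / (1 - fps_X) ^ r
           = Abs_fps (\<lambda>n. if n = 0 then 0 else dhyper r n l)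
         \<and> dhyper r 0 l = 0"
proof
  have "- fps_compose (dlog l) (- fps_X) / (1 - fps_X) ^ r
     = - fps_compose (dlog l) (- fps_X) * inverse ((1 - fps_X) ^ r)"
    by (rule fps_divide_unit) (simp add: fps_nth_power_0)
  also have "\<dots> = - fps_compose (dlog l) (- fps_X) * Abs_fps (\<lambda>n. 1) ^ r"
    unfolding fps_inverse_power inv1 ..
  also have "\<dots> = Abs_fps (\<lambda>n. dhyper r n l)" by (rule main[OF assms])
  also have "\<dots> = Abs_fps (\<lambda>n. if n = 0 then 0 else dhyper r n l)"
    using dhyper0 by (simp add: fps_eq_iff)
  finally show "- fps_compose (dlog l) (- fps_X) / (1 - fps_X) ^ r
           = Abs_fps (\<lambda>n. if n = 0 then 0 else dhyper r n l)" .
  show "dhyper r 0 l = 0" by (rule dhyper0)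
qed

end
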